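(* The inhomogeneous domain wall boundary partition function $Z_N(\{u\}_N|\{w\}_N)$ satisfies: (1) it is a polynomial in $w_N$ of degree at most $N-1$; (2) it is symmetric in $u_1,\dots,u_N$; (3) $Z_1(u_1|w_1)=(1-t)cu_1$; (4) for $N\ge2$ and each $k\in\{1,\dots,N\}$, \[Z_N(\{u\}_N|\{w\}_N)\big|_{w_N=-au_k/b}=(1-t)ca^{N-1}u_k\prod_{j\neq k}(tu_j-u_k)\prod_{j=1}^{N-1}(eu_k+fw_j)\,Z_{N-1}(u_1,\dots,\widehat{u_k},\dots,u_N|w_1,\dots,w_{N-1}),\] where $\widehat{u_k}$ means $u_k$ is omitted.
   Context: Fix complex parameters $t,a,b,c,d,e,f$, all nonzero, with $t\neq1$, satisfying $cd+af=0$ and $tcd+be=0$. The inhomogeneous $L$-operator $L_{aj}(u,w)$ on $W_a\otimes V_j$ ($\cong\mathbb{C}^2\otimes\mathbb{C}^2$, basis $|0\rangle,|1\rangle$) has matrix elements ${}_a\langle\gamma|{}_j\langle\delta|L_{aj}(u,w)|\alpha\rangle_a|\beta\rangle_j=[L(u,w)]^{\gamma\delta}_{\alpha\beta}$: $[L]^{00}_{00}=au+bw$, $[L]^{01}_{01}=atu+bw$, $[L]^{01}_{10}=(1-t)cu$, $[L]^{10}_{01}=(1-t)dw$, $[L]^{10}_{10}=eu+fw$, $[L]^{11}_{11}=eu+tfw$, all others $0$. Define $B_N(u|\{w\}_N)={}_a\langle0|L_{aN}(u,w_N)\cdots L_{a1}(u,w_1)|1\rangle_a$ on $V_1\otimes\cdots\otimes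 V_N$ and $Z_N(\{u\}_N|\{w\}_N)=\langle1\cdots N|B_N(u_1|\{w\}_N)\cdots B_N(u_N|\{w\}_N)|\Omega\rangle$ with $|\Omega\rangle=|0\rangle^{\otimes N}$, $\langle1\cdots N|=\langle1|^{\otimes N}$. *)

theory Defs
  imports Complex_Main "HOL-Computational_Algebra.Polynomial"
begin

text \<open>Basis convention: False = |0>, True = |1>.
  Lel prm u w g d al be is the matrix element [L(u,w)]^{g d}_{al be}, where the
  parameter tuple is prm = (t,a,b,c,d,e,f).\<close>

type_synonym params = "complex \<times> complex \<times> complex \<times> complex \<times> complex \<times> complex \<times> complex"

fun Lel :: "params \<Rightarrow> complex \<Rightarrow> complex \<Rightarrow> bool \<Rightarrow> bool \<Rightarrow> bool \<Rightarrow> bool \<Rightarrow> complex" where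
  "Lel (t,a,b,c,d,e,f) u w g dl al be =
    (if \<not>g \<and> \<not>dl \<and> \<not>al \<and> \<not>be then a*u + b*w
     else if \<not>g \<and> dl \<and> \<not>al \<and> be then a*t*u + b*w
     else if \<not>g \<and> dl \<and> al \<and> \<not>be then (1-t)*c*u
     else if g \<and> \<not>dl \<and> \<not>al \<and> be then (1-t)*d*w
     else if g \<and> \<not>dl \<and> al \<and> \<not>be then e*u + f*w
     else if g \<and> dl \<and> al \<and> be then e*u + t*f*w
     else 0)"

text \<open>Matrix element
  <gam|_a <ds| L_{a n}(u,w_n) ... L_{a 1}(u,w_1) |al>_a |bs>,
  where the list ws = [w_1,...,w_n] and ds, bs list the quantum-space
  states of sites 1..n in order.\<close>
fun Mono :: "params \<Rightarrow> complex \<Rightarrow> complex list \<Rightarrow> bool list \<Rightarrow> bool list \<Rightarrow> bool \<Rightarrow> bool \<Rightarrow> complex" where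
  "Mono p u [] [] [] al gam = (if al = gam then 1 else 0)"
| "Mono p u (w#ws) (dl#ds) (be#bs) al gam =
     (\<Sum>g\<in>UNIV. Lel p u w g dl al be * Mono p u ws ds bs g gam)"
| "Mono p u _ _ _ al gam = 0"

text \<open>Matrix element <ds| B_N(u|ws) |bs> with B_N = <0|_a T |1>_a.\<close>
definition Bel :: "params \<Rightarrow> complex \<Rightarrow> complex list \<Rightarrow> bool list \<Rightarrow> bool list \<Rightarrow> complex" where
  "Bel p u ws ds bs = Mono p u ws ds bs True False"

text \<open>Action of B_N(u|ws) on a vector of V_1 (x) ... (x) V_N, vectors being
  coefficient functions on basis configurations (bool lists of length N).\<close>
definition applyB :: "params \<Rightarrow> complex list \<Rightarrow> complex \<Rightarrow> (bool list \<Rightarrow> complex) \<Rightarrow> (bool list \<Rightarrow> complex)" where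
  "applyB p ws u v = (\<lambda>ds. \<Sum>bs\<in>{xs. length xs = length ws}. Bel p u ws ds bs * v bs)"

definition Omega :: "nat \<Rightarrow> bool list \<Rightarrow> complex" where
  "Omega n = (\<lambda>bs. if bs = replicate n False then 1 else 0)"

text \<open>Z_N(us|ws) = <1...N| B_N(u_1|ws) ... B_N(u_N|ws) |Omega>.\<close>
definition Z :: "params \<Rightarrow> complex list \<Rightarrow> complex list \<Rightarrow> complex" where
  "Z p us ws = foldr (applyB p ws) us (Omega (length ws)) (replicate (length ws) True)"

end

theory Submission
  imports Defs "HOL-Library.Multiset"
begin


lemma Mono_len:
  assumes "length ds \<noteq> length ws \<or> length bs \<noteq> length ws"
  shows "Mono p u ws ds bs al gam = 0"
  using assms
proof (induction ws arbitrary: ds bs al)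
  case Nil
  then show ?case by (cases ds; cases bs) auto
next
  case (Cons w ws)
  then show ?case by (cases ds; cases bs) auto
qed

lemma sum_len_Suc:
  "(\<Sum>bs\<in>{xs::bool list. length xs = Suc n}. F bs) = (\<Sum>m\<in>UNIV. \<Sum>bs\<in>{xs. length xs = n}. F (m#bs))"
proof -
  have e: "{xs::bool list. length xs = Suc n} = (\<lambda>(m,bs). m#bs) ` (UNIV \<times> {xs. length xs = n})"
    by (auto simp: image_def length_Suc_conv)
  have i: "inj_on (\<lambda>(m,bs). m#(bs::bool list)) (UNIV \<times> {xs. length xs = n})"
    by (auto simp: inj_on_def)
  show ?thesis unfolding e
    by (subst sum.reindex[OF i]) (simp add: sum.cartesian_product split_def)
qed

lemma sum_len_snoc:
  "(\<Sum>bs\<in>{xs::bool list. length xs = Suc n}. F bs) = (\<Sum>bs\<in>{xs. length xs = n}. \<Sum>m\<in>UNIV. F (bs@[m]))"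
proof -
  have e: "{xs::bool list. length xs = Suc n} = (\<lambda>(bs,m). bs@[m]) ` ({xs. length xs = n} \<times> UNIV)"
    apply (auto simp: image_def)
    by (metis append_butlast_last_id length_0_conv length_butlast diff_Suc_1 nat.simps(3))
  have i: "inj_on (\<lambda>(bs,m). bs@[m::bool]) ({xs. length xs = n} \<times> UNIV)"
    by (auto simp: inj_on_def)
  show ?thesis unfolding e
    by (subst sum.reindex[OF i]) (simp add: sum.cartesian_product split_def)
qed

lemma Mono_snoc:
  "length ds = length ws \<Longrightarrow> length bs = length ws \<Longrightarrow>
   Mono p u (ws@[x]) (ds@[d]) (bs@[b]) al gam = (\<Sum>g\<in>UNIV. Mono p u ws ds bs al g * Lel p u x gam d g b)"
proof (induction ws arbitrary: ds bs al)
  case Nil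
  then show ?case by (simp add: UNIV_bool)
next
  case (Cons w ws)
  then obtain d1 ds' b1 bs' where "ds = d1#ds'" "bs = b1#bs'"
    by (metis length_Suc_conv)
  with Cons show ?case
    by (simp add: sum_distrib_left sum_distrib_right mult.assoc) (rule sum.swap)
qed


definition Rm :: "complex \<Rightarrow> complex \<Rightarrow> complex \<Rightarrow> bool\<times>bool \<Rightarrow> bool\<times>bool \<Rightarrow> complex" where
  "Rm t u v g h = (let g1 = fst g; g2 = snd g; h1 = fst h; h2 = snd h in
     if g1 = g2 \<and> h1 = g1 \<and> h2 = g2 then u - t*v
     else if \<not>g1 \<and> g2 \<and> \<not>h1 \<and> h2 then t*(u-v)
     else if \<not>g1 \<and> g2 \<and> h1 \<and> \<not>h2 then (1-t)*u
     else if g1 \<and> \<not>g2 \<and> \<not>h1 \<and> h2 then (1-t)*v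
     else if g1 \<and> \<not>g2 \<and> h1 \<and> \<not>h2 then u - v
     else 0)"

definition Site :: "params \<Rightarrow> complex \<Rightarrow> complex \<Rightarrow> complex \<Rightarrow> bool \<Rightarrow> bool \<Rightarrow> bool\<times>bool \<Rightarrow> bool\<times>bool \<Rightarrow> complex" where
  "Site p u v w dq cq h al = (\<Sum>m\<in>UNIV. Lel p u w (fst h) dq (fst al) m * Lel p v w (snd h) m (snd al) cq)"

lemma UNIV_pair_bool: "(UNIV :: (bool\<times>bool) set) = {(False,False),(False,True),(True,False),(True,True)}"
  by auto

lemma site_RLL:
  assumes "c*d + a*f = 0" "t*c*d + b*e = 0"
  shows "(\<Sum>h\<in>UNIV. Rm t u v g h * Site (t,a,b,c,d,e,f) u v w dq cq h al)
       = (\<Sum>z\<in>UNIV. Site (t,a,b,c,d,e,f) v u w dq cq (prod.swap g) (prod.swap z) * Rm t u v z al)"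
proof -
  obtain g1 g2 where g: "g = (g1,g2)" by fastforce
  obtain a1 a2 where al: "al = (a1,a2)" by fastforce
  have be: "\<And>x. b*(e*x) = -(t*(c*(d*x)))" using assms(2)
    by (metis add_eq_0_iff mult.assoc mult.commute mult_minus_left)
  have af: "\<And>x. a*(f*x) = -(c*(d*x))" using assms(1)
    by (metis add_eq_0_iff mult.assoc mult.commute mult_minus_left)
  show ?thesis unfolding g al
    apply (cases g1; cases g2; cases a1; cases a2; cases dq; cases cq)
    apply (simp_all add: UNIV_pair_bool Site_def Rm_def UNIV_bool)
    apply (simp_all add: algebra_simps)
    apply (simp_all add: be af algebra_simps)
    done
qed


definition PP :: "params \<Rightarrow> complex \<Rightarrow> complex \<Rightarrow> complex list \<Rightarrow> bool list \<Rightarrow> bool list \<Rightarrow> bool\<times>bool \<Rightarrow> bool\<times>bool \<Rightarrow> complex" where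
  "PP p u v ws ds cs g al = (\<Sum>bs\<in>{xs. length xs = length ws}.
      Mono p u ws ds bs (fst al) (fst g) * Mono p v ws bs cs (snd al) (snd g))"

lemma PP_Cons:
  "PP p u v (w#ws) (dq#ds) (cq#cs) g al = (\<Sum>h\<in>UNIV. PP p u v ws ds cs g h * Site p u v w dq cq h al)"
  unfolding PP_def Site_def
  by (simp add: sum_len_Suc UNIV_bool UNIV_pair_bool sum.distrib sum_distrib_left sum_distrib_right algebra_simps)

lemma massoc:
  fixes A :: "'x \<Rightarrow> 'c::comm_semiring_1"
  shows "(\<Sum>x\<in>X. A x * (\<Sum>h\<in>H. B x h * C h)) = (\<Sum>h\<in>H. (\<Sum>x\<in>X. A x * B x h) * C h)"
  by (simp add: sum_distrib_left sum_distrib_right mult.assoc) (rule sum.swap)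

lemma sum_swap_pair: "(\<Sum>h\<in>(UNIV::(bool\<times>bool) set). F h) = (\<Sum>y\<in>UNIV. F (prod.swap y))"
  by (simp add: UNIV_pair_bool add_ac)

lemma train:
  assumes "c*d + a*f = 0" "t*c*d + b*e = 0"
  shows "(\<Sum>x\<in>UNIV. Rm t u v g x * PP (t,a,b,c,d,e,f) u v ws ds cs x al)
       = (\<Sum>z\<in>UNIV. PP (t,a,b,c,d,e,f) v u ws ds cs (prod.swap g) (prod.swap z) * Rm t u v z al)"
proof (induction ws arbitrary: ds cs g al)
  case Nil
  show ?case
  proof (cases "ds = [] \<and> cs = []")
    case True
    obtain g1 g2 where g: "g = (g1,g2)" by fastforce
    obtain a1 a2 where al: "al = (a1,a2)" by fastforce
    from True show ?thesis unfolding g al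
      by (cases g1; cases g2; cases a1; cases a2; simp add: PP_def UNIV_pair_bool Rm_def)
  next
    case False
    then have "\<And>x y. PP (t,a,b,c,d,e,f) u v [] ds cs x y = 0" "\<And>x y. PP (t,a,b,c,d,e,f) v u [] ds cs x y = 0"
      unfolding PP_def by (auto intro!: sum.neutral simp: Mono_len)
    then show ?thesis by simp
  qed
next
  case (Cons w ws)
  let ?p = "(t,a,b,c,d,e,f)"
  show ?case
  proof (cases "\<exists>dq ds' cq cs'. ds = dq#ds' \<and> cs = cq#cs'")
    case False
    then have dsc: "ds = [] \<or> cs = []" by (metis neq_Nil_conv)
    then have "\<And>x y. PP ?p u v (w#ws) ds cs x y = 0" "\<And>x y. PP ?p v u (w#ws) ds cs x y = 0"
      unfolding PP_def
      by (auto intro!: sum.neutral)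
    then show ?thesis by simp
  next
    case True
    then obtain dq ds' cq cs' where dc: "ds = dq#ds'" "cs = cq#cs'" by blast
    have "(\<Sum>x\<in>UNIV. Rm t u v g x * PP ?p u v (w#ws) ds cs x al)
        = (\<Sum>x\<in>UNIV. Rm t u v g x * (\<Sum>h\<in>UNIV. PP ?p u v ws ds' cs' x h * Site ?p u v w dq cq h al))"
      by (simp add: dc PP_Cons)
    also have "\<dots> = (\<Sum>h\<in>UNIV. (\<Sum>x\<in>UNIV. Rm t u v g x * PP ?p u v ws ds' cs' x h) * Site ?p u v w dq cq h al)"
      by (rule massoc)
    also have "\<dots> = (\<Sum>h\<in>UNIV. (\<Sum>y\<in>UNIV. PP ?p v u ws ds' cs' (prod.swap g) (prod.swap y) * Rm t u v y h) * Site ?p u v w dq cq h al)"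
      by (simp add: Cons.IH)
    also have "\<dots> = (\<Sum>y\<in>UNIV. PP ?p v u ws ds' cs' (prod.swap g) (prod.swap y) * (\<Sum>h\<in>UNIV. Rm t u v y h * Site ?p u v w dq cq h al))"
      by (rule massoc[symmetric])
    also have "\<dots> = (\<Sum>y\<in>UNIV. PP ?p v u ws ds' cs' (prod.swap g) (prod.swap y) * (\<Sum>z\<in>UNIV. Site ?p v u w dq cq (prod.swap y) (prod.swap z) * Rm t u v z al))"
      by (simp add: site_RLL[OF assms])
    also have "\<dots> = (\<Sum>z\<in>UNIV. (\<Sum>y\<in>UNIV. PP ?p v u ws ds' cs' (prod.swap g) (prod.swap y) * Site ?p v u w dq cq (prod.swap y) (prod.swap z)) * Rm t u v z al)"
      by (rule massoc)
    also have "\<dots> = (\<Sum>z\<in>UNIV. PP ?p v u (w#ws) ds cs (prod.swap g) (prod.swap z) * Rm t u v z al)"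
      by (simp add: dc PP_Cons sum_swap_pair[of "\<lambda>y. PP ?p v u ws ds' cs' (prod.swap g) y * _ y"])
    finally show ?thesis .
  qed
qed



lemma isCont_Lel: "isCont (\<lambda>u. Lel p u w g dq al be) z"
proof -
  obtain t a b c d e f where p: "p = (t,a,b,c,d,e,f)" by (cases p)
  show ?thesis unfolding p
    by (cases g; cases dq; cases al; cases be) (auto intro!: continuous_intros)
qed

lemma isCont_Mono: "isCont (\<lambda>u. Mono p u ws ds bs al gam) z"
proof (induction ws arbitrary: ds bs al)
  case Nil
  then show ?case by (cases ds; cases bs) auto
next
  case (Cons w ws)
  then show ?case
    by (cases ds; cases bs) (auto intro!: continuous_intros isCont_Lel)
qed

lemma cont_zero:
  fixes h :: "complex \<Rightarrow> complex"
  assumes "isCont h z" "\<And>u. u \<noteq> z \<Longrightarrow> h u = 0"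
  shows "h z = 0"
proof -
  have "(h \<longlongrightarrow> h z) (at z)" using assms(1) by (simp add: isCont_def)
  moreover have "(h \<longlongrightarrow> 0) (at z)"
    by (rule tendsto_eventually) (auto simp: eventually_at intro!: exI[of _ 1] assms(2))
  ultimately show ?thesis using tendsto_unique by (metis at_neq_bot)
qed

definition XX :: "params \<Rightarrow> complex list \<Rightarrow> bool list \<Rightarrow> bool list \<Rightarrow> complex \<Rightarrow> complex \<Rightarrow> complex" where
  "XX p ws ds cs u v = (\<Sum>bs\<in>{xs. length xs = length ws}. Bel p u ws ds bs * Bel p v ws bs cs)"

lemma XX_comm:
  assumes "c*d + a*f = 0" "t*c*d + b*e = 0"
  shows "XX (t,a,b,c,d,e,f) ws ds cs u v = XX (t,a,b,c,d,e,f) ws ds cs v u"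
proof -
  let ?p = "(t,a,b,c,d,e,f)"
  have key: "(u' - t*v) * XX ?p ws ds cs u' v = (u' - t*v) * XX ?p ws ds cs v u'" for u'
  proof -
    have T: "(\<Sum>x\<in>UNIV. Rm t u' v (False,False) x * PP ?p u' v ws ds cs x (True,True))
       = (\<Sum>z\<in>UNIV. PP ?p v u' ws ds cs (prod.swap (False,False)) (prod.swap z) * Rm t u' v z (True,True))"
      by (rule train[OF assms])
    have r1: "Rm t u' v (False,False) x = (if x = (False,False) then u' - t*v else 0)" for x
      by (cases x) (auto simp: Rm_def)
    have r2: "Rm t u' v z (True,True) = (if z = (True,True) then u' - t*v else 0)" for z
      by (cases z) (auto simp: Rm_def)
    have pp: "PP ?p x y ws ds cs (False,False) (True,True) = XX ?p ws ds cs x y" for x y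
      by (simp add: PP_def XX_def Bel_def)
    have L: "(\<Sum>x\<in>UNIV. Rm t u' v (False,False) x * PP ?p u' v ws ds cs x (True,True)) = (u' - t*v) * XX ?p ws ds cs u' v"
      by (simp add: UNIV_pair_bool r1 pp)
    have R: "(\<Sum>z\<in>UNIV. PP ?p v u' ws ds cs (prod.swap (False,False)) (prod.swap z) * Rm t u' v z (True,True)) = (u' - t*v) * XX ?p ws ds cs v u'"
      by (simp add: UNIV_pair_bool r2 pp)
    show ?thesis using T L R by simp
  qed
  let ?h = "\<lambda>u'. XX ?p ws ds cs u' v - XX ?p ws ds cs v u'"
  have c: "isCont ?h z" for z
    unfolding XX_def Bel_def by (auto intro!: continuous_intros isCont_Mono)
  have hne: "?h u' = 0" if "u' \<noteq> t*v" for u'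
    using key[of u'] that by simp
  have h0: "?h (t*v) = 0" by (rule cont_zero[OF c]) (rule hne)
  have "?h u = 0" using hne[of u] h0 by (cases "u = t*v") simp_all
  then show ?thesis by simp
qed

lemma applyB_comm:
  assumes "c*d + a*f = 0" "t*c*d + b*e = 0"
  shows "applyB (t,a,b,c,d,e,f) ws u \<circ> applyB (t,a,b,c,d,e,f) ws v = applyB (t,a,b,c,d,e,f) ws v \<circ> applyB (t,a,b,c,d,e,f) ws u"
proof (rule ext, rule ext)
  fix V ds
  let ?p = "(t,a,b,c,d,e,f)"
  have e: "applyB ?p ws u (applyB ?p ws v V) ds = (\<Sum>cs\<in>{xs. length xs = length ws}. XX ?p ws ds cs u v * V cs)" for u v
    unfolding applyB_def XX_def by (rule massoc)
  show "(applyB ?p ws u \<circ> applyB ?p ws v) V ds = (applyB ?p ws v \<circ> applyB ?p ws u) V ds"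
    using e[of u v] e[of v u] XX_comm[OF assms] by simp
qed

lemma Z_sym:
  assumes "c*d + a*f = 0" "t*c*d + b*e = 0" "mset vs = mset us"
  shows "Z (t,a,b,c,d,e,f) vs ws = Z (t,a,b,c,d,e,f) us ws"
  unfolding Z_def foldr_conv_fold
  by (subst fold_multiset_equiv[of "rev vs" _ "rev us"]) (use assms applyB_comm in auto)




definition pdeg :: "nat \<Rightarrow> (complex \<Rightarrow> complex) \<Rightarrow> bool" where
  "pdeg k F \<longleftrightarrow> (\<exists>q. degree q \<le> k \<and> (\<forall>x. F x = poly q x))"

lemma pdeg_mono: "pdeg k F \<Longrightarrow> k \<le> k' \<Longrightarrow> pdeg k' F"
  unfolding pdeg_def by (meson order_trans)

lemma pdeg_const: "pdeg k (\<lambda>x. c)"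
  unfolding pdeg_def by (rule exI[of _ "[:c:]"]) simp

lemma pdeg_lin: "pdeg 1 (\<lambda>x. \<alpha> + \<beta>*x)"
  unfolding pdeg_def by (rule exI[of _ "[:\<alpha>, \<beta>:]"]) (simp add: degree_pCons_le)

lemma pdeg_add: "pdeg k F \<Longrightarrow> pdeg k G \<Longrightarrow> pdeg k (\<lambda>x. F x + G x)"
  unfolding pdeg_def
  by (metis degree_add_le poly_add)

lemma pdeg_mult: "pdeg i F \<Longrightarrow> pdeg j G \<Longrightarrow> pdeg (i+j) (\<lambda>x. F x * G x)"
  unfolding pdeg_def
  by (metis add_mono degree_mult_le order_trans poly_mult)

lemma pdeg_sum: "finite A \<Longrightarrow> (\<And>a. a \<in> A \<Longrightarrow> pdeg k (F a)) \<Longrightarrow> pdeg k (\<lambda>x. \<Sum>a\<in>A. F a x)"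
proof (induction A rule: finite_induct)
  case empty
  then show ?case by (simp add: pdeg_const)
next
  case (insert a A)
  then show ?case by (simp add: pdeg_add)
qed

lemma pdeg_cong: "pdeg k F \<Longrightarrow> (\<And>x. G x = F x) \<Longrightarrow> pdeg k G"
  by (metis ext)

lemma pdeg_Lel1: "pdeg 1 (\<lambda>x. Lel p u x False dq g m)"
proof -
  obtain t a b c d e f where p: "p = (t,a,b,c,d,e,f)" by (cases p)
  show ?thesis unfolding p
    by (cases dq; cases g; cases m) (auto intro: pdeg_lin pdeg_const pdeg_mono)
qed

lemma pdeg_Lel0: "pdeg 0 (\<lambda>x. Lel p u x False True g False)"
proof -
  obtain t a b c d e f where p: "p = (t,a,b,c,d,e,f)" by (cases p)
  show ?thesis unfolding p
    by (cases g) (auto intro: pdeg_const)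
qed

lemma Lel_FT: "Lel p u x False False g True = 0"
proof -
  obtain t a b c d e f where p: "p = (t,a,b,c,d,e,f)" by (cases p)
  show ?thesis unfolding p by (cases g) auto
qed

lemma pdeg_Bel:
  assumes "length ws0 = n"
  shows "pdeg 1 (\<lambda>x. Bel p u (ws0@[x]) (ds0@[dq]) (bs0@[m]))"
    and "pdeg 0 (\<lambda>x. Bel p u (ws0@[x]) (ds0@[True]) (bs0@[False]))"
    and "Bel p u (ws0@[x]) (ds0@[False]) (bs0@[True]) = 0"
proof -
  have "pdeg 1 (\<lambda>x. Bel p u (ws0@[x]) (ds0@[dq]) (bs0@[m])) \<and>
        pdeg 0 (\<lambda>x. Bel p u (ws0@[x]) (ds0@[True]) (bs0@[False])) \<and>
        Bel p u (ws0@[x]) (ds0@[False]) (bs0@[True]) = 0"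
  proof (cases "length ds0 = length ws0 \<and> length bs0 = length ws0")
    case True
    then show ?thesis
      unfolding Bel_def
      by (simp add: Mono_snoc Lel_FT)
         (intro conjI pdeg_sum pdeg_cong[OF pdeg_mult[OF pdeg_const pdeg_Lel1], simplified]
                pdeg_cong[OF pdeg_mult[OF pdeg_const pdeg_Lel0], simplified]; simp)
  next
    case False
    then show ?thesis
      unfolding Bel_def by (auto simp: Mono_len pdeg_const)
  qed
  then show "pdeg 1 (\<lambda>x. Bel p u (ws0@[x]) (ds0@[dq]) (bs0@[m]))"
    and "pdeg 0 (\<lambda>x. Bel p u (ws0@[x]) (ds0@[True]) (bs0@[False]))"
    and "Bel p u (ws0@[x]) (ds0@[False]) (bs0@[True]) = 0" by auto
qed


lemma neq_rep: "ds0@[True] \<noteq> replicate k False"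
proof
  assume "ds0@[True] = replicate k False"
  then have "True \<in> set (replicate k False)" by (metis in_set_conv_decomp)
  then show False by simp
qed

lemma snoc_cases: "xs \<noteq> [] \<Longrightarrow> xs = butlast xs @ [last xs]"
  by simp

lemma V_pdeg:
  fixes wz :: "complex list" and p :: params
  defines "V \<equiv> \<lambda>vs x. foldr (applyB p (wz@[x])) vs (Omega (Suc (length wz)))"
  shows "pdeg (length vs) (\<lambda>x. V vs x (dz@[False])) \<and>
         pdeg (length vs - 1) (\<lambda>x. V vs x (dz@[True])) \<and>
         (vs = [] \<longrightarrow> (\<forall>x. V vs x (dz@[True]) = 0))"
proof (induction vs arbitrary: dz)
  case Nil
  show ?case using neq_rep[of dz "Suc (length wz)"] by (simp add: V_def Omega_def pdeg_const del: replicate_Suc)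
next
  case (Cons u vs)
  let ?n = "length wz"
  have VC: "V (u#vs) x ds = (\<Sum>bs0\<in>{xs. length xs = ?n}. \<Sum>m\<in>UNIV. Bel p u (wz@[x]) ds (bs0@[m]) * V vs x (bs0@[m]))" for x ds
    by (simp add: V_def applyB_def sum_len_snoc)
  have F: "pdeg (Suc (length vs)) (\<lambda>x. V (u#vs) x (dz@[False]))"
  proof (rule pdeg_cong[OF pdeg_sum[OF _ pdeg_sum]])
    show "finite {xs::bool list. length xs = ?n}" using finite_lists_length_eq[of "UNIV::bool set" "?n"] by simp
    fix bs0 :: "bool list" and m :: bool
    show "pdeg (Suc (length vs)) (\<lambda>x. Bel p u (wz@[x]) (dz@[False]) (bs0@[m]) * V vs x (bs0@[m]))"
    proof (cases m)
      case True
      then show ?thesis using pdeg_Bel(3)[of wz ?n p u _ dz bs0] by (simp add: pdeg_const)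
    next
      case False
      then show ?thesis
        using pdeg_mult[OF pdeg_Bel(1)[of wz ?n p u dz False bs0 False] conjunct1[OF Cons.IH[of bs0]]]
        by simp
    qed
  qed (auto simp: VC)
  have T: "pdeg (length vs) (\<lambda>x. V (u#vs) x (dz@[True]))"
  proof (rule pdeg_cong[OF pdeg_sum[OF _ pdeg_sum]])
    show "finite {xs::bool list. length xs = ?n}" using finite_lists_length_eq[of "UNIV::bool set" "?n"] by simp
    fix bs0 :: "bool list" and m :: bool
    show "pdeg (length vs) (\<lambda>x. Bel p u (wz@[x]) (dz@[True]) (bs0@[m]) * V vs x (bs0@[m]))"
    proof (cases m)
      case True
      show ?thesis
      proof (cases vs)
        case Nil
        then show ?thesis using Cons.IH[of bs0] True by (simp add: pdeg_const)
      next
        case (Cons v vs')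
        then show ?thesis using True
          pdeg_mult[OF pdeg_Bel(1)[of wz ?n p u dz True bs0 True] conjunct1[OF conjunct2[OF Cons.IH[of bs0]]]]
          by simp
      qed
    next
      case False
      then show ?thesis
        using pdeg_mult[OF pdeg_Bel(2)[of wz ?n p u dz bs0] conjunct1[OF Cons.IH[of bs0]]]
        by simp
    qed
  qed (auto simp: VC)
  show ?case using F T by simp
qed

lemma Z_poly:
  assumes "N \<ge> 1" "length us = N" "length ws = N"
  shows "\<exists>q :: complex poly. degree q \<le> N - 1 \<and> (\<forall>x. Z p us (ws[N-1 := x]) = poly q x)"
proof -
  obtain ws0 w where ws: "ws = ws0 @ [w]" using assms
    by (metis One_nat_def Suc_le_length_iff rev_exhaust list.distinct(1))
  have l: "length ws0 = N - 1" using ws assms by simp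
  have upd: "ws[N-1 := x] = ws0 @ [x]" for x using ws l by (simp add: list_update_append)
  have r: "replicate N True = replicate (N-1) True @ [True]" using assms
    by (metis Suc_diff_1 less_le_trans replicate_Suc replicate_append_same zero_less_one)
  have "pdeg (length us - 1) (\<lambda>x. foldr (applyB p (ws0@[x])) us (Omega (Suc (length ws0))) (replicate (N-1) True @ [True]))"
    using V_pdeg[where p=p and wz=ws0 and vs=us and dz="replicate (N-1) True"] by simp
  moreover have "Z p us (ws[N-1 := x]) = foldr (applyB p (ws0@[x])) us (Omega (Suc (length ws0))) (replicate (N-1) True @ [True])" for x
    unfolding Z_def upd using l assms r by simp
  ultimately show ?thesis using assms unfolding pdeg_def by auto
qed



lemma row0: "Mono (t,a,b,c,d,e,f) u ws ds (replicate (length ws) False) False True = 0"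
proof (induction ws arbitrary: ds)
  case Nil then show ?case by (cases ds) auto
next
  case (Cons w ws)
  then show ?case by (cases ds) (auto simp: UNIV_bool)
qed

lemma row1: "Mono (t,a,b,c,d,e,f) u ws ds (replicate (length ws) False) True True =
   (if ds = replicate (length ws) False then (\<Prod>w\<leftarrow>ws. e*u + f*w) else 0)"
proof (induction ws arbitrary: ds)
  case Nil then show ?case by (cases ds) auto
next
  case (Cons w ws)
  then show ?case by (cases ds) (auto simp: UNIV_bool row0)
qed

lemma first_row:
  assumes "a*uN + b*x = 0" "length ws0 = n"
  shows "applyB (t,a,b,c,d,e,f) (ws0@[x]) uN (Omega (Suc n)) ds =
    (if ds = replicate n False @ [True] then (1-t)*c*uN * (\<Prod>w\<leftarrow>ws0. e*uN + f*w) else 0)"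
proof -
  let ?p = "(t,a,b,c,d,e,f)"
  have "applyB ?p (ws0@[x]) uN (Omega (Suc n)) ds = Bel ?p uN (ws0@[x]) ds (replicate n False @ [False])"
  proof -
    have "applyB ?p (ws0@[x]) uN (Omega (Suc n)) ds
        = (\<Sum>bs\<in>{xs. length xs = Suc n}. if bs = replicate n False @ [False] then Bel ?p uN (ws0@[x]) ds bs else 0)"
      unfolding applyB_def Omega_def using assms(2)
      by (intro sum.cong) (auto simp: replicate_append_same)
    also have "\<dots> = Bel ?p uN (ws0@[x]) ds (replicate n False @ [False])"
      using finite_lists_length_eq[of "UNIV::bool set" "Suc n"] by (subst sum.delta) auto
    finally show ?thesis .
  qed
  also have "\<dots> = (if ds = replicate n False @ [True] then (1-t)*c*uN * (\<Prod>w\<leftarrow>ws0. e*uN + f*w) else 0)"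
  proof (cases "\<exists>ds0 dq. ds = ds0 @ [dq] \<and> length ds0 = n")
    case True
    then obtain ds0 dq where ds: "ds = ds0 @ [dq]" "length ds0 = n" by blast
    have "Bel ?p uN (ws0@[x]) (ds0@[dq]) (replicate n False @ [False])
        = (\<Sum>g\<in>UNIV. Mono ?p uN ws0 ds0 (replicate n False) True g * Lel ?p uN x False dq g False)"
      unfolding Bel_def using ds assms(2) by (simp add: Mono_snoc)
    also have "\<dots> = (if ds0 = replicate n False \<and> dq then (1-t)*c*uN * (\<Prod>w\<leftarrow>ws0. e*uN + f*w) else 0)"
      using assms row1[of t a b c d e f uN ws0 ds0]
      by (cases dq) (auto simp: UNIV_bool)
    finally show ?thesis using ds by auto
  next
    case False
    then have "length ds \<noteq> Suc n"
      by (metis append_butlast_last_id length_butlast diff_Suc_1 list.size(3) nat.simps(3))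
    then show ?thesis unfolding Bel_def using assms(2) by (auto simp: Mono_len)
  qed
  finally show ?thesis .
qed

lemma applyB_scale: "applyB p ws u (\<lambda>bs. k * G bs) ds = k * applyB p ws u G ds"
  unfolding applyB_def by (simp add: sum_distrib_left mult_ac)

lemma col_step:
  assumes "length ws0 = n"
    and X1: "\<And>ds0. X (ds0@[True]) = Y ds0" and X0: "\<And>ds0. X (ds0@[False]) = 0"
  shows "applyB (t,a,b,c,d,e,f) (ws0@[x]) u X (ds0@[True]) = (a*t*u + b*x) * applyB (t,a,b,c,d,e,f) ws0 u Y ds0"
    and "applyB (t,a,b,c,d,e,f) (ws0@[x]) u X (ds0@[False]) = 0"
proof -
  let ?p = "(t,a,b,c,d,e,f)"
  have S: "applyB ?p (ws0@[x]) u X (ds0@[dq]) = (\<Sum>bs0\<in>{xs. length xs = n}. Bel ?p u (ws0@[x]) (ds0@[dq]) (bs0@[True]) * Y bs0)" for dq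
    unfolding applyB_def using assms(1) by (simp add: sum_len_snoc UNIV_bool X1 X0)
  have B: "Bel ?p u (ws0@[x]) (ds0@[dq]) (bs0@[True]) = (if dq then (a*t*u + b*x) * Bel ?p u ws0 ds0 bs0 else 0)"
    if "length bs0 = n" for dq bs0
  proof (cases "length ds0 = n")
    case True
    then show ?thesis unfolding Bel_def using that assms(1)
      by (cases dq) (auto simp: Mono_snoc UNIV_bool)
  next
    case False
    then show ?thesis unfolding Bel_def using that assms(1) by (auto simp: Mono_len)
  qed
  have "(\<Sum>bs0\<in>{xs. length xs = n}. Bel ?p u (ws0@[x]) (ds0@[True]) (bs0@[True]) * Y bs0)
      = (\<Sum>bs0\<in>{xs. length xs = n}. (a*t*u + b*x) * (Bel ?p u ws0 ds0 bs0 * Y bs0))"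
    by (rule sum.cong) (auto simp: B)
  then show "applyB ?p (ws0@[x]) u X (ds0@[True]) = (a*t*u + b*x) * applyB ?p ws0 u Y ds0"
    unfolding S by (simp add: applyB_def assms(1) sum_distrib_left)
  show "applyB ?p (ws0@[x]) u X (ds0@[False]) = 0"
    unfolding S by (rule sum.neutral) (auto simp: B)
qed

lemma col_fold:
  assumes "length ws0 = n"
    and X1: "\<And>ds0. X (ds0@[True]) = Y ds0" and X0: "\<And>ds0. X (ds0@[False]) = 0"
  shows "foldr (applyB (t,a,b,c,d,e,f) (ws0@[x])) vs X (ds0@[True]) = (\<Prod>v\<leftarrow>vs. a*t*v + b*x) * foldr (applyB (t,a,b,c,d,e,f) ws0) vs Y ds0
       \<and> foldr (applyB (t,a,b,c,d,e,f) (ws0@[x])) vs X (ds0@[False]) = 0"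
proof (induction vs arbitrary: ds0)
  case Nil
  then show ?case using X1 X0 by simp
next
  case (Cons v vs)
  let ?p = "(t,a,b,c,d,e,f)"
  have "applyB ?p (ws0@[x]) v (foldr (applyB ?p (ws0@[x])) vs X) (ds0@[True])
     = (a*t*v + b*x) * applyB ?p ws0 v (\<lambda>bs. (\<Prod>v\<leftarrow>vs. a*t*v + b*x) * foldr (applyB ?p ws0) vs Y bs) ds0"
    by (rule col_step(1)[OF assms(1)]) (use Cons.IH in auto)
  moreover have "applyB ?p (ws0@[x]) v (foldr (applyB ?p (ws0@[x])) vs X) (ds0@[False]) = 0"
    by (rule col_step(2)[OF assms(1)]) (use Cons.IH in auto)
  ultimately show ?case by (simp add: applyB_scale)
qed

lemma Z_last:
  assumes "a*uN + b*x = 0" "length ws0 = n"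
  shows "Z (t,a,b,c,d,e,f) (us0 @ [uN]) (ws0@[x]) =
     (1-t)*c*uN * (\<Prod>w\<leftarrow>ws0. e*uN + f*w) * (\<Prod>v\<leftarrow>us0. a*t*v + b*x) * Z (t,a,b,c,d,e,f) us0 ws0"
proof -
  let ?p = "(t,a,b,c,d,e,f)"
  let ?C = "(1-t)*c*uN * (\<Prod>w\<leftarrow>ws0. e*uN + f*w)"
  let ?X = "applyB ?p (ws0@[x]) uN (Omega (Suc n))"
  have X1: "?X (ds0@[True]) = ?C * Omega n ds0" for ds0
    using first_row[OF assms] by (simp add: Omega_def)
  have X0: "?X (ds0@[False]) = 0" for ds0
    using first_row[OF assms] by simp
  have "Z ?p (us0 @ [uN]) (ws0@[x]) = foldr (applyB ?p (ws0@[x])) us0 ?X (replicate n True @ [True])"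
    unfolding Z_def using assms(2) by (simp add: replicate_append_same)
  also have "\<dots> = (\<Prod>v\<leftarrow>us0. a*t*v + b*x) * foldr (applyB ?p ws0) us0 (\<lambda>ds. ?C * Omega n ds) (replicate n True)"
    using col_fold[OF assms(2), of ?X "\<lambda>ds. ?C * Omega n ds"] X1 X0 by blast
  also have "foldr (applyB ?p ws0) us0 (\<lambda>ds. ?C * Omega n ds) = (\<lambda>ds. ?C * foldr (applyB ?p ws0) us0 (Omega n) ds)"
    by (induction us0) (auto simp: applyB_scale)
  finally show ?thesis unfolding Z_def using assms(2) by (simp add: mult_ac)
qed


lemma len0_set: "{xs::bool list. length xs = 0} = {[]}" by auto

lemma prod_list_scale: "(\<Prod>v\<leftarrow>xs. k * g v) = k ^ length xs * (\<Prod>v\<leftarrow>xs. g v)"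
  for k :: complex by (induction xs) (auto simp: mult_ac)

theorem mainTheorem6:
  fixes t a b c d e f :: complex and N :: nat and us ws :: "complex list"
  assumes "t \<noteq> 0" "a \<noteq> 0" "b \<noteq> 0" "c \<noteq> 0" "d \<noteq> 0" "e \<noteq> 0" "f \<noteq> 0"
    and "t \<noteq> 1" and "c*d + a*f = 0" and "t*c*d + b*e = 0"
    and "N \<ge> 1" and "length us = N" and "length ws = N"
  shows "(\<exists>q :: complex poly. degree q \<le> N - 1 \<and>
            (\<forall>x. Z (t,a,b,c,d,e,f) us (ws[N-1 := x]) = poly q x))
       \<and> (\<forall>vs. mset vs = mset us \<longrightarrow> Z (t,a,b,c,d,e,f) vs ws = Z (t,a,b,c,d,e,f) us ws)
       \<and> (\<forall>u1 w1. Z (t,a,b,c,d,e,f) [u1] [w1] = (1-t)*c*u1)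
       \<and> (N \<ge> 2 \<longrightarrow> (\<forall>k<N.
            Z (t,a,b,c,d,e,f) us (ws[N-1 := -a*us!k/b])
            = (1-t)*c*a^(N-1)*us!k
              * (\<Prod>j\<in>{0..<N}-{k}. t*us!j - us!k)
              * (\<Prod>j<N-1. e*us!k + f*ws!j)
              * Z (t,a,b,c,d,e,f) (take k us @ drop (Suc k) us) (take (N-1) ws)))"
proof (intro conjI allI impI)
  let ?p = "(t,a,b,c,d,e,f)"
  show "\<exists>q :: complex poly. degree q \<le> N - 1 \<and> (\<forall>x. Z ?p us (ws[N-1 := x]) = poly q x)"
    by (rule Z_poly) (use assms in auto)
  show "Z ?p vs ws = Z ?p us ws" if "mset vs = mset us" for vs
    by (rule Z_sym) (use assms that in auto)
  show "Z ?p [u1] [w1] = (1-t)*c*u1" for u1 w1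
    by (simp add: Z_def applyB_def Omega_def Bel_def UNIV_bool sum_len_Suc len0_set)
  fix k assume N2: "N \<ge> 2" and k: "k < N"
  define uk where "uk = us!k"
  define us' where "us' = take k us @ drop (Suc k) us"
  define ws0 where "ws0 = take (N-1) ws"
  define x where "x = -a*us!k/b"
  have lws0: "length ws0 = N-1" using assms unfolding ws0_def by simp
  have lus': "length us' = N-1" using assms k unfolding us'_def by simp
  have upd: "ws[N-1 := x] = ws0 @ [x]"
  proof -
    have i: "N - 1 < length ws" using assms by simp
    have "drop (N-1) ws = ws!(N-1) # drop (Suc (N-1)) ws"
      using Cons_nth_drop_Suc[OF i] by simp
    also have "Suc (N-1) = N" using assms by simp
    finally have "drop (N-1) ws = [ws!(N-1)]" using assms by simp
    then have "ws = ws0 @ [ws!(N-1)]" unfolding ws0_def by (metis append_take_drop_id)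
    then show ?thesis using lws0 by (metis list_update_length)
  qed
  have ms: "mset (us' @ [uk]) = mset us"
  proof -
    have "us = take k us @ uk # drop (Suc k) us" unfolding uk_def using k assms
      by (simp add: id_take_nth_drop)
    then have "mset us = mset (take k us @ uk # drop (Suc k) us)" by simp
    then show ?thesis unfolding us'_def by simp
  qed
  have ax: "a*uk + b*x = 0" unfolding x_def uk_def using assms(3) by simp
  have L: "Z ?p us (ws[N-1 := x]) = (1-t)*c*uk * (\<Prod>w\<leftarrow>ws0. e*uk + f*w) * (\<Prod>v\<leftarrow>us'. a*t*v + b*x) * Z ?p us' ws0"
  proof -
    have "Z ?p us (ws[N-1 := x]) = Z ?p (us' @ [uk]) (ws0 @ [x])"
      unfolding upd by (rule Z_sym[symmetric]) (use assms ms in auto)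
    also have "\<dots> = (1-t)*c*uk * (\<Prod>w\<leftarrow>ws0. e*uk + f*w) * (\<Prod>v\<leftarrow>us'. a*t*v + b*x) * Z ?p us' ws0"
      by (rule Z_last[OF ax lws0])
    finally show ?thesis .
  qed
  have P1: "(\<Prod>w\<leftarrow>ws0. e*uk + f*w) = (\<Prod>j<N-1. e*uk + f*ws!j)"
    unfolding prod.list_conv_set_nth using lws0
    by (auto simp: ws0_def atLeast0LessThan intro!: prod.cong)
  have P2: "(\<Prod>v\<leftarrow>us'. a*t*v + b*x) = a^(N-1) * (\<Prod>v\<leftarrow>us'. t*v - uk)"
  proof -
    have "(\<Prod>v\<leftarrow>us'. a*t*v + b*x) = (\<Prod>v\<leftarrow>us'. a * (t*v - uk))"
      using ax by (intro arg_cong[where f=prod_list] map_cong) (auto simp: algebra_simps eq_neg_iff_add_eq_0)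
    then show ?thesis by (simp add: prod_list_scale lus')
  qed
  show "Z ?p us (ws[N-1 := -a*us!k/b])
            = (1-t)*c*a^(N-1)*us!k
              * (\<Prod>j\<in>{0..<N}-{k}. t*us!j - us!k)
              * (\<Prod>j<N-1. e*us!k + f*ws!j)
              * Z ?p (take k us @ drop (Suc k) us) (take (N-1) ws)"
  proof (cases "uk = 0")
    case True
    then show ?thesis using L unfolding x_def uk_def by simp
  next
    case False
    let ?g = "\<lambda>v. t*v - uk"
    have "?g uk = (t-1)*uk" by (simp add: algebra_simps)
    then have gk: "?g uk \<noteq> 0" using False assms(8) by simp
    have "?g uk * (\<Prod>j\<in>{0..<N}-{k}. ?g (us!j)) = (\<Prod>j\<in>{0..<N}. ?g (us!j))"
      using k by (subst prod.remove[of "{0..<N}" k]) (auto simp: uk_def)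
    also have "\<dots> = (\<Prod>v\<leftarrow>us. ?g v)"
      unfolding prod.list_conv_set_nth using assms(12) by simp
    also have "\<dots> = prod_mset (mset (map ?g us))" by (rule prod_mset_prod_list[symmetric])
    also have "\<dots> = prod_mset (mset (map ?g (us' @ [uk])))" using ms by (simp only: mset_map)
    also have "\<dots> = (\<Prod>v\<leftarrow>us' @ [uk]. ?g v)" by (rule prod_mset_prod_list)
    also have "\<dots> = ?g uk * (\<Prod>v\<leftarrow>us'. ?g v)" by simp
    finally have Q: "(\<Prod>j\<in>{0..<N}-{k}. ?g (us!j)) = (\<Prod>v\<leftarrow>us'. ?g v)"
      using gk by simp
    show ?thesis using L P1 P2 Q unfolding x_def uk_def us'_def ws0_def
      by (simp add: mult_ac)
  qed
qed


end
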